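(* In the setting of a metric space $\Omega$ with finite Borel measure $\eta$ and finite families $Y_n(\omega)=\{f_{l,n}(\omega)\}_{l=1}^{R_n}\subset\mathbb R^d$ of continuous functions of $\omega$, assume there is $G:(0,\infty)\to(0,\infty)$ with $\lim_{s\to0}G(s)=0$ and $\eta(\Omega)-\int_\Omega T(Y_n(\omega),sR_n^{-1/d})/R_n\,d\eta\le G(s)$ for all $n$ and $s>0$. For $c,s>0$ and $n\in\mathbb N$ let $B(c,s,n)=\{\omega: T(Y_n(\omega),sR_n^{-1/d})/R_n>c\}$. Then $$\eta\Big(\bigcap_{\epsilon>0}\bigcup_{c,s>0}\{\omega:\overline d(\{n:\omega\in B(c,s,n)\})\ge1-\epsilon\}\Big)=\eta(\Omega).$$
   Context: $T(Y,r)$ is the maximal cardinality of an $r$-separated subset of the finite set $Y$ (distinct points at distance $>r$). $\overline d(B)=\limsup_n\#(B\cap[1,n])/n$ for $B\subseteq\mathbb N$. *)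

theory Defs
  imports "HOL-Analysis.Analysis" "HOL-Library.Liminf_Limsup"
begin

definition separated :: "real \<Rightarrow> 'b::metric_space set \<Rightarrow> bool" where
  "separated r S \<longleftrightarrow> (\<forall>x\<in>S. \<forall>y\<in>S. x \<noteq> y \<longrightarrow> dist x y > r)"

definition Tsep :: "'b::metric_space set \<Rightarrow> real \<Rightarrow> nat" where
  "Tsep Y r = Max {card S | S. S \<subseteq> Y \<and> separated r S}"

definition upper_density :: "nat set \<Rightarrow> ereal" where
  "upper_density B = limsup (\<lambda>n. ereal (real (card (B \<inter> {1..n})) / real n))"

end

theory Submission
  imports Defs
begin

lemma key:
  fixes M :: "'a measure" and B :: "nat \<Rightarrow> 'a set"
  assumes fm: "finite_measure M" and Bm: "\<And>n. B n \<in> sets M"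
    and Bb: "\<And>n. n \<ge> 1 \<Longrightarrow> measure M (space M - B n) \<le> \<delta>"
    and ep: "\<epsilon> > 0"
  shows "{\<omega>\<in>space M. upper_density {n. \<omega> \<in> B n} < ereal (1-\<epsilon>)} \<in> sets M
       \<and> measure M {\<omega>\<in>space M. upper_density {n. \<omega> \<in> B n} < ereal (1-\<epsilon>)} \<le> \<delta>/\<epsilon>"
proof -
  interpret finite_measure M by (rule fm)
  have d0: "\<delta> \<ge> 0" using Bb[of 1] measure_nonneg[of M "space M - B 1"] by linarith
  have cnt: "real (card ({n. \<omega> \<in> B n} \<inter> {1..N})) = (\<Sum>n\<in>{1..N}. indicator (B n) \<omega>)" for \<omega> N
  proof -
    have "(\<Sum>n\<in>{1..N}. indicator (B n) \<omega>) = (\<Sum>n\<in>{1..N}. if n \<in> {n. \<omega> \<in> B n} then 1 else (0::real))"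
      by (intro sum.cong) (auto simp: indicator_def)
    also have "\<dots> = real (card ({1..N} \<inter> {n. \<omega> \<in> B n}))"
      by (subst sum.If_cases) auto
    finally show ?thesis by (simp add: Int_commute)
  qed
  have ud: "upper_density {n. \<omega> \<in> B n} = limsup (\<lambda>N. ereal ((\<Sum>n\<in>{1..N}. indicator (B n) \<omega>) / real N))" for \<omega>
    unfolding upper_density_def cnt ..
  have udm: "(\<lambda>\<omega>. upper_density {n. \<omega> \<in> B n}) \<in> borel_measurable M"
    unfolding ud using Bm by measurable
  define E where "E = {\<omega>\<in>space M. upper_density {n. \<omega> \<in> B n} < ereal (1-\<epsilon>)}"
  have Em: "E \<in> sets M" unfolding E_def using udm by measurable
  define u where "u N \<omega> = ennreal ((\<Sum>n\<in>{1..N}. indicator (space M - B n) \<omega>) / real N)" for N \<omega>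
  have um: "u N \<in> borel_measurable M" for N unfolding u_def using Bm by measurable
  have lim: "ennreal \<epsilon> * indicator E \<omega> \<le> liminf (\<lambda>N. u N \<omega>)" for \<omega>
  proof (cases "\<omega> \<in> E")
    case True
    then have sp: "\<omega> \<in> space M" and lt: "limsup (\<lambda>N. ereal ((\<Sum>n\<in>{1..N}. indicator (B n) \<omega>) / real N)) < ereal (1-\<epsilon>)"
      unfolding E_def ud by auto
    have ev: "eventually (\<lambda>N. ereal ((\<Sum>n\<in>{1..N}. indicator (B n) \<omega>) / real N) < ereal (1-\<epsilon>)) sequentially"
      by (rule Limsup_lessD[OF lt])
    have "eventually (\<lambda>N. ennreal \<epsilon> \<le> u N \<omega>) sequentially"
      using ev eventually_ge_at_top[of 1]
    proof eventually_elim
      case (elim N)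
      have s1: "(\<Sum>n\<in>{1..N}. indicator (space M - B n) \<omega>) = (\<Sum>n\<in>{1..N}. 1 - indicator (B n) \<omega> :: real)"
        by (intro sum.cong) (auto simp: indicator_def sp)
      have "(\<Sum>n\<in>{1..N}. indicator (B n) \<omega>) / real N < 1 - \<epsilon>" using elim by simp
      then have "(\<Sum>n\<in>{1..N}. indicator (B n) \<omega>) < (1 - \<epsilon>) * real N" using elim
        by (simp add: divide_less_eq)
      then have "\<epsilon> * real N \<le> (\<Sum>n\<in>{1..N}. indicator (space M - B n) \<omega>)"
        unfolding s1 by (simp add: sum_subtractf algebra_simps)
      then have "\<epsilon> \<le> (\<Sum>n\<in>{1..N}. indicator (space M - B n) \<omega>) / real N" using elim
        by (simp add: le_divide_eq)
      then show ?case unfolding u_def by (simp add: ennreal_leI)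
    qed
    then show ?thesis using True by (simp add: Liminf_bounded)
  qed auto
  have i1: "integrable M (indicator (space M - B n) :: _ \<Rightarrow> real)" for n
    using Bm by (intro integrable_real_indicator) (auto simp: less_top[symmetric])
  have intb: "integral\<^sup>N M (u N) \<le> ennreal \<delta>" for N
  proof (cases "N = 0")
    case True then have "u N = (\<lambda>_. 0)" by (simp add: u_def fun_eq_iff)
    then show ?thesis by simp
  next
    case False
    have int: "integrable M (\<lambda>\<omega>. (\<Sum>n\<in>{1..N}. indicator (space M - B n) \<omega>) / real N :: real)"
    proof -
      have "integrable M (\<lambda>\<omega>. (\<Sum>n\<in>{1..N}. indicator (space M - B n) \<omega>) :: real)"
        using i1 by (intro Bochner_Integration.integrable_sum) auto
      then show ?thesis by (rule integrable_divide)
    qed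
    have "integral\<^sup>N M (u N) = ennreal (\<integral>\<omega>. (\<Sum>n\<in>{1..N}. indicator (space M - B n) \<omega>) / real N \<partial>M)"
      unfolding u_def by (rule nn_integral_eq_integral[OF int]) (auto intro!: sum_nonneg divide_nonneg_nonneg)
    also have "(\<integral>\<omega>. (\<Sum>n\<in>{1..N}. indicator (space M - B n) \<omega>) / real N \<partial>M)
        = (\<Sum>n\<in>{1..N}. measure M (space M - B n)) / real N"
      using Bm i1 by (simp add: Bochner_Integration.integral_sum)
    also have "\<dots> \<le> (\<Sum>n\<in>{1..N}. \<delta>) / real N"
      by (intro divide_right_mono sum_mono Bb) auto
    also have "\<dots> = \<delta>" using False by simp
    finally show ?thesis by (simp add: ennreal_leI)
  qed
  have "ennreal \<epsilon> * emeasure M E = (\<integral>\<^sup>+\<omega>. ennreal \<epsilon> * indicator E \<omega> \<partial>M)"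
    using Em by (simp add: nn_integral_cmult_indicator)
  also have "\<dots> \<le> (\<integral>\<^sup>+\<omega>. liminf (\<lambda>N. u N \<omega>) \<partial>M)"
    by (intro nn_integral_mono lim)
  also have "\<dots> \<le> liminf (\<lambda>N. integral\<^sup>N M (u N))"
    by (rule nn_integral_liminf[OF um])
  also have "\<dots> \<le> ennreal \<delta>"
  proof -
    have "limsup (\<lambda>N. integral\<^sup>N M (u N)) \<le> ennreal \<delta>"
      by (intro Limsup_bounded always_eventually allI intb)
    then show ?thesis using Liminf_le_Limsup[of sequentially] by (metis order_trans sequentially_bot)
  qed
  finally have "ennreal (\<epsilon> * measure M E) \<le> ennreal \<delta>"
    using ep by (simp add: emeasure_eq_measure ennreal_mult)
  then have "\<epsilon> * measure M E \<le> \<delta>" using d0 by (simp add: ennreal_le_iff)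
  then have "measure M E \<le> \<delta>/\<epsilon>" using ep by (simp add: le_divide_eq mult.commute)
  then show ?thesis using Em unfolding E_def by simp
qed

lemma Tsep_set_fin:
  assumes "finite Y"
  shows "finite {card S | S. S \<subseteq> Y \<and> separated r S}" "0 \<in> {card S | S. S \<subseteq> Y \<and> separated r S}"
proof -
  have "{card S | S. S \<subseteq> Y \<and> separated r S} \<subseteq> card ` Pow Y" by auto
  then show "finite {card S | S. S \<subseteq> Y \<and> separated r S}" using assms finite_subset by blast
  show "0 \<in> {card S | S. S \<subseteq> Y \<and> separated r S}"
    by (rule CollectI, rule exI[of _ "{}"]) (simp add: separated_def)
qed

lemma Tsep_le_card:
  assumes "finite Y"
  shows "Tsep Y r \<le> card Y"
  unfolding Tsep_def using Tsep_set_fin[OF assms, of r]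
  by (subst Max_le_iff) (auto intro: card_mono[OF assms])

lemma Tsep_antimono:
  assumes "finite Y" "r' \<le> r"
  shows "Tsep Y r \<le> Tsep Y r'"
  unfolding Tsep_def
proof (rule Max_mono)
  show "{card S |S. S \<subseteq> Y \<and> separated r S} \<subseteq> {card S |S. S \<subseteq> Y \<and> separated r' S}"
  proof -
    have "separated r' S" if "separated r S" for S
      using that assms(2) unfolding separated_def by force
    then show ?thesis by blast
  qed
qed (use Tsep_set_fin[OF assms(1)] in blast)+

lemma Tsep_idx:
  fixes g :: "nat \<Rightarrow> 'b::metric_space"
  assumes fin: "finite I" and r: "r \<ge> 0"
  shows "Tsep (g ` I) r = Max ((\<lambda>L. if (\<forall>i\<in>L. \<forall>j\<in>L. i \<noteq> j \<longrightarrow> r < dist (g i) (g j)) then card L else 0) ` Pow I)"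
  unfolding Tsep_def
proof (rule arg_cong[where f=Max], rule set_eqI, rule iffI)
  fix k assume "k \<in> {card S |S. S \<subseteq> g ` I \<and> separated r S}"
  then obtain S where S: "k = card S" "S \<subseteq> g ` I" "separated r S" by blast
  define L where "L = inv_into I g ` S"
  have LI: "L \<subseteq> I"
  proof
    fix i assume "i \<in> L"
    then obtain x where "x \<in> S" "i = inv_into I g x" unfolding L_def by blast
    then show "i \<in> I" using S(2) inv_into_into[of x g I] by blast
  qed
  have inj: "inj_on (inv_into I g) S" using S(2) by (rule inj_on_inv_into)
  have cL: "card L = card S" unfolding L_def using inj by (rule card_image)
  have pw: "\<forall>i\<in>L. \<forall>j\<in>L. i \<noteq> j \<longrightarrow> r < dist (g i) (g j)"
  proof (intro ballI impI)
    fix i j assume "i \<in> L" "j \<in> L" "i \<noteq> j"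
    then obtain x y where xy: "x \<in> S" "y \<in> S" "i = inv_into I g x" "j = inv_into I g y"
      unfolding L_def by blast
    have "x \<in> g ` I" "y \<in> g ` I" using xy S(2) by blast+
    then have gx: "g i = x" "g j = y" using xy(3,4) by (simp_all add: f_inv_into_f)
    have "x \<noteq> y" using xy \<open>i \<noteq> j\<close> by blast
    then show "r < dist (g i) (g j)" using S(3) xy(1,2) gx unfolding separated_def by blast
  qed
  have "k = (\<lambda>L. if (\<forall>i\<in>L. \<forall>j\<in>L. i \<noteq> j \<longrightarrow> r < dist (g i) (g j)) then card L else 0) L"
    using pw cL S(1) by simp
  then show "k \<in> (\<lambda>L. if (\<forall>i\<in>L. \<forall>j\<in>L. i \<noteq> j \<longrightarrow> r < dist (g i) (g j)) then card L else 0) ` Pow I"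
    by (rule image_eqI) (use LI in blast)
next
  fix k assume "k \<in> (\<lambda>L. if (\<forall>i\<in>L. \<forall>j\<in>L. i \<noteq> j \<longrightarrow> r < dist (g i) (g j)) then card L else 0) ` Pow I"
  then obtain L where L: "L \<subseteq> I" "k = (if (\<forall>i\<in>L. \<forall>j\<in>L. i \<noteq> j \<longrightarrow> r < dist (g i) (g j)) then card L else 0)"
    by blast
  show "k \<in> {card S |S. S \<subseteq> g ` I \<and> separated r S}"
  proof (cases "\<forall>i\<in>L. \<forall>j\<in>L. i \<noteq> j \<longrightarrow> r < dist (g i) (g j)")
    case True
    have inj: "inj_on g L"
    proof (rule inj_onI, rule ccontr)
      fix i j assume "i \<in> L" "j \<in> L" "g i = g j" "i \<noteq> j"
      then have "r < dist (g i) (g j)" using True by blast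
      then show False using \<open>g i = g j\<close> r by simp
    qed
    have sep: "separated r (g ` L)" unfolding separated_def
    proof (intro ballI impI)
      fix x y assume xy: "x \<in> g ` L" "y \<in> g ` L" "x \<noteq> y"
      then obtain i j where ij: "i \<in> L" "j \<in> L" "x = g i" "y = g j" by blast
      then have "i \<noteq> j" using xy(3) by blast
      then have "r < dist (g i) (g j)" using True ij(1,2) by blast
      then show "r < dist x y" using ij(3,4) by simp
    qed
    have kL: "k = card L" using L(2) True by simp
    have cg: "card (g ` L) = card L" using inj by (rule card_image)
    have sub: "g ` L \<subseteq> g ` I" using L(1) by (rule image_mono)
    show ?thesis unfolding mem_Collect_eq
      by (rule exI[of _ "g ` L"]) (simp add: kL cg sub sep)
  next
    case False
    then have "k = 0" using L(2) by (simp only: if_False)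
    then show ?thesis using Tsep_set_fin(2)[of "g ` I" r] fin by simp
  qed
qed

lemma real_Max_image:
  assumes "finite P" "P \<noteq> {}"
  shows "real (Max (h ` P)) = Max ((\<lambda>x. real (h x)) ` P)"
proof -
  have "real (Max (h ` P)) = Max (real ` h ` P)"
    using assms by (intro mono_Max_commute) (auto simp: mono_def)
  then show ?thesis by (simp add: image_image)
qed

lemma Tsep_meas:
  fixes g :: "nat \<Rightarrow> 'a \<Rightarrow> 'b::{metric_space,second_countable_topology}"
  assumes fin: "finite I" and r: "r \<ge> 0" and gm: "\<And>i. i \<in> I \<Longrightarrow> g i \<in> borel_measurable M"
  shows "(\<lambda>\<omega>. real (Tsep ((\<lambda>l. g l \<omega>) ` I) r)) \<in> borel_measurable M"
proof -
  define P where "P L \<omega> = (\<forall>i\<in>L. \<forall>j\<in>L. i \<noteq> j \<longrightarrow> r < dist (g i \<omega>) (g j \<omega>))" for L \<omega>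
  have pw: "Measurable.pred M (P L)" if L: "L \<subseteq> I" for L
  proof -
    have finL: "finite L" using L fin finite_subset by blast
    show ?thesis unfolding P_def
  proof (intro pred_intros_finite finL)
    fix i j assume ij: "i \<in> L" "j \<in> L"
    show "Measurable.pred M (\<lambda>\<omega>. i \<noteq> j \<longrightarrow> r < dist (g i \<omega>) (g j \<omega>))"
    proof (cases "i = j")
      case True then show ?thesis by (simp add: pred_def)
    next
      case False
      have "g i \<in> borel_measurable M" "g j \<in> borel_measurable M" using L gm ij by auto
      then have "(\<lambda>\<omega>. dist (g i \<omega>) (g j \<omega>)) \<in> borel_measurable M" by (rule borel_measurable_dist)
      then have "{\<omega>\<in>space M. r < dist (g i \<omega>) (g j \<omega>)} \<in> sets M"
        by (intro borel_measurable_less borel_measurable_const)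
      then show ?thesis using False by (simp add: pred_def)
    qed
  qed
  qed
  have fm: "(\<lambda>\<omega>. real (if P L \<omega> then card L else 0)) \<in> borel_measurable M"
    if "L \<in> Pow I" for L
  proof -
    have "(\<lambda>\<omega>. if P L \<omega> then real (card L) else 0) \<in> borel_measurable M"
      using pw[of L] that by (intro measurable_If) auto
    moreover have "\<And>\<omega>. real (if P L \<omega> then card L else 0) = (if P L \<omega> then real (card L) else 0)"
      by simp
    ultimately show ?thesis by (simp only:)
  qed
  have eq: "real (Tsep ((\<lambda>l. g l \<omega>) ` I) r) = Max ((\<lambda>L. real (if P L \<omega> then card L else 0)) ` Pow I)" for \<omega>
  proof -
    have "Tsep ((\<lambda>l. g l \<omega>) ` I) r = Max ((\<lambda>L. if P L \<omega> then card L else 0) ` Pow I)"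
      unfolding P_def by (rule Tsep_idx[OF fin r])
    then show ?thesis using fin by (simp only: real_Max_image[OF finite_Pow_iff[THEN iffD2, OF fin] Pow_not_empty])
  qed
  show ?thesis unfolding eq
    by (rule borel_measurable_Max[OF finite_Pow_iff[THEN iffD2, OF fin] fm])
qed


lemma ud_mono:
  assumes "A \<subseteq> B"
  shows "upper_density A \<le> upper_density B"
  unfolding upper_density_def
proof (rule Limsup_mono, rule always_eventually, rule allI)
  fix n :: nat
  have "card (A \<inter> {1..n}) \<le> card (B \<inter> {1..n})" using assms by (intro card_mono) auto
  then show "ereal (real (card (A \<inter> {1..n})) / real n) \<le> ereal (real (card (B \<inter> {1..n})) / real n)"
    by (simp add: divide_right_mono)
qed

theorem mainTheorem11:
  fixes \<eta> :: "'a::metric_space measure"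
    and f :: "nat \<Rightarrow> nat \<Rightarrow> 'a \<Rightarrow> real ^ 'd"
    and R :: "nat \<Rightarrow> nat"
    and G :: "real \<Rightarrow> real"
  assumes fin: "finite_measure \<eta>"
    and borel: "sets \<eta> = sets borel"
    and Rpos: "\<forall>n\<ge>1. R n > 0"
    and cont: "\<forall>n\<ge>1. \<forall>l\<in>{1..R n}. continuous_on UNIV (f l n)"
    and Gpos: "\<forall>s>0. G s > 0"
    and Glim: "(G \<longlongrightarrow> 0) (at_right 0)"
    and bound: "\<forall>n\<ge>1. \<forall>s>0.
        measure \<eta> (space \<eta>)
        - (\<integral>\<omega>. real (Tsep ((\<lambda>l. f l n \<omega>) ` {1..R n})
                  (s * real (R n) powr (- 1 / real CARD('d)))) / real (R n) \<partial>\<eta>)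
        \<le> G s"
  shows "let B = (\<lambda>c s n. {\<omega>. n \<ge> 1 \<and>
            real (Tsep ((\<lambda>l. f l n \<omega>) ` {1..R n})
                  (s * real (R n) powr (- 1 / real CARD('d)))) / real (R n) > c})
         in measure \<eta> (\<Inter>\<epsilon>\<in>{0<..}. \<Union>c\<in>{0<..}. \<Union>s\<in>{0<..}.
              {\<omega>. upper_density {n. \<omega> \<in> B c s n} \<ge> ereal (1 - \<epsilon>)})
            = measure \<eta> (space \<eta>)"
proof -
  interpret finite_measure \<eta> by (rule fin)
  have sp: "space \<eta> = UNIV" using sets_eq_imp_space_eq[OF borel] by simp
  define rr where "rr s n = s * real (R n) powr (- 1 / real CARD('d))" for s n
  define X where "X s n \<omega> = real (Tsep ((\<lambda>l. f l n \<omega>) ` {1..R n}) (rr s n)) / real (R n)" for s n \<omega>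
  define Bs where "Bs c s n = {\<omega>. n \<ge> 1 \<and> X s n \<omega> > c}" for c s n
  define D where "D c s \<omega> = upper_density {n. \<omega> \<in> Bs c s n}" for c s \<omega>
  define \<mu> where "\<mu> = measure \<eta> (space \<eta>)"
  have rr0: "rr s n \<ge> 0" if "s > 0" for s n using that unfolding rr_def by simp
  have Xm: "X s n \<in> borel_measurable \<eta>" if "s > 0" "n \<ge> 1" for s n
  proof -
    have "f l n \<in> borel_measurable \<eta>" if "l \<in> {1..R n}" for l
    proof -
      have "continuous_on UNIV (f l n)" using cont \<open>n \<ge> 1\<close> that by blast
      then have "f l n \<in> borel_measurable borel" by (rule borel_measurable_continuous_onI)
      then show ?thesis by (subst measurable_cong_sets[OF borel refl])
    qed
    then have "(\<lambda>\<omega>. real (Tsep ((\<lambda>l. f l n \<omega>) ` {1..R n}) (rr s n))) \<in> borel_measurable \<eta>"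
      by (intro Tsep_meas rr0 \<open>s > 0\<close>) auto
    then show ?thesis unfolding X_def by measurable
  qed
  have Bsm: "Bs c s n \<in> sets \<eta>" if "s > 0" for c s n
  proof (cases "n \<ge> 1")
    case True
    have "Bs c s n = {\<omega>\<in>space \<eta>. c < X s n \<omega>}" using True unfolding Bs_def sp by auto
    also have "\<dots> \<in> sets \<eta>" using Xm[OF that True] by measurable
    finally show ?thesis .
  next
    case False then show ?thesis unfolding Bs_def by simp
  qed
  have X01: "0 \<le> X s n \<omega> \<and> X s n \<omega> \<le> 1" if "n \<ge> 1" for s n \<omega>
  proof -
    have "Tsep ((\<lambda>l. f l n \<omega>) ` {1..R n}) (rr s n) \<le> card ((\<lambda>l. f l n \<omega>) ` {1..R n})"
      by (intro Tsep_le_card) auto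
    also have "\<dots> \<le> R n" using card_image_le[of "{1..R n}" "\<lambda>l. f l n \<omega>"] by simp
    finally show ?thesis using Rpos that unfolding X_def by auto
  qed
  have Bmono: "Bs c s n \<subseteq> Bs c' s' n" if "0 < c'" "c' \<le> c" "0 < s'" "s' \<le> s" for c s c' s' n
  proof
    fix \<omega> assume "\<omega> \<in> Bs c s n"
    then have n1: "n \<ge> 1" and cx: "c < X s n \<omega>" unfolding Bs_def by auto
    have "rr s' n \<le> rr s n" unfolding rr_def using that by (intro mult_right_mono) auto
    then have "Tsep ((\<lambda>l. f l n \<omega>) ` {1..R n}) (rr s n) \<le> Tsep ((\<lambda>l. f l n \<omega>) ` {1..R n}) (rr s' n)"
      by (intro Tsep_antimono) auto
    then have "X s n \<omega> \<le> X s' n \<omega>" unfolding X_def by (intro divide_right_mono) auto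
    then show "\<omega> \<in> Bs c' s' n" using n1 cx that unfolding Bs_def by auto
  qed
  have comp: "measure \<eta> (space \<eta> - Bs c s n) \<le> 2 * G s" if "n \<ge> 1" "0 < c" "c \<le> 1/2" "0 < s" for c s n
  proof -
    let ?A = "Bs c s n"
    have Am: "?A \<in> sets \<eta>" using Bsm \<open>0 < s\<close> by blast
    have intX: "integrable \<eta> (X s n)"
    proof (rule integrable_const_bound[where B=1])
      show "AE x in \<eta>. norm (X s n x) \<le> 1" using X01[OF \<open>n \<ge> 1\<close>] by (auto intro!: AE_I2)
      show "X s n \<in> borel_measurable \<eta>" using Xm \<open>0 < s\<close> \<open>n \<ge> 1\<close> by blast
    qed
    have iA: "integrable \<eta> (indicator ?A :: _ \<Rightarrow> real)"
      using Am by (intro integrable_real_indicator) (auto simp: less_top[symmetric])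
    have iC: "integrable \<eta> (indicator (space \<eta> - ?A) :: _ \<Rightarrow> real)"
      using Am by (intro integrable_real_indicator) (auto simp: less_top[symmetric])
    have iR: "integrable \<eta> (\<lambda>\<omega>. indicator ?A \<omega> + c * indicator (space \<eta> - ?A) \<omega> :: real)"
      using iA iC by (intro Bochner_Integration.integrable_add integrable_mult_right)
    have pt: "X s n \<omega> \<le> indicator ?A \<omega> + c * indicator (space \<eta> - ?A) \<omega>" if "\<omega> \<in> space \<eta>" for \<omega>
    proof (cases "\<omega> \<in> ?A")
      case True then show ?thesis using X01[OF \<open>n \<ge> 1\<close>, of s \<omega>] by simp
    next
      case False
      then have "X s n \<omega> \<le> c" using \<open>n \<ge> 1\<close> unfolding Bs_def by auto
      then show ?thesis using False that by simp
    qed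
    have "(\<integral>\<omega>. X s n \<omega> \<partial>\<eta>) \<le> (\<integral>\<omega>. indicator ?A \<omega> + c * indicator (space \<eta> - ?A) \<omega> \<partial>\<eta>)"
      by (rule integral_mono[OF intX iR pt])
    also have "\<dots> = measure \<eta> ?A + c * measure \<eta> (space \<eta> - ?A)"
      using iA iC Am by (simp add: Bochner_Integration.integral_add Int_absorb2 sets.sets_into_space)
    also have "measure \<eta> ?A = \<mu> - measure \<eta> (space \<eta> - ?A)"
      using finite_measure_compl[OF Am] unfolding \<mu>_def by simp
    finally have I: "(\<integral>\<omega>. X s n \<omega> \<partial>\<eta>) \<le> \<mu> - (1 - c) * measure \<eta> (space \<eta> - ?A)"
      by (simp add: algebra_simps)
    have "\<mu> - (\<integral>\<omega>. X s n \<omega> \<partial>\<eta>) \<le> G s"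
      using bound \<open>n \<ge> 1\<close> \<open>0 < s\<close> unfolding \<mu>_def X_def rr_def by blast
    then have "(1 - c) * measure \<eta> (space \<eta> - ?A) \<le> G s" using I by linarith
    moreover have "(1/2) * measure \<eta> (space \<eta> - ?A) \<le> (1 - c) * measure \<eta> (space \<eta> - ?A)"
      using \<open>c \<le> 1/2\<close> by (intro mult_right_mono) auto
    ultimately show ?thesis by linarith
  qed
  have E: "{\<omega>\<in>space \<eta>. D (1/real j) (1/real j) \<omega> < ereal (1 - 1/real k)} \<in> sets \<eta>
       \<and> measure \<eta> {\<omega>\<in>space \<eta>. D (1/real j) (1/real j) \<omega> < ereal (1 - 1/real k)} \<le> 2 * G (1/real j) * real k"
    if "j \<ge> 2" "k \<ge> 1" for j k
  proof -
    have "{\<omega>\<in>space \<eta>. D (1/real j) (1/real j) \<omega> < ereal (1 - 1/real k)} \<in> sets \<eta>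
       \<and> measure \<eta> {\<omega>\<in>space \<eta>. D (1/real j) (1/real j) \<omega> < ereal (1 - 1/real k)} \<le> (2 * G (1/real j)) / (1/real k)"
      unfolding D_def using that
      by (intro key fin Bsm comp) auto
    then show ?thesis by simp
  qed
  define EE where "EE j k = {\<omega>\<in>space \<eta>. D (1/real j) (1/real j) \<omega> < ereal (1 - 1/real k)}" for j k
  define Z where "Z = (\<Inter>k\<in>{1::nat..}. \<Union>j\<in>{2::nat..}. (space \<eta> - EE j k))"
  have Zeq: "(\<Inter>\<epsilon>\<in>{0<..}. \<Union>c\<in>{0<..}. \<Union>s\<in>{0<..}. {\<omega>. D c s \<omega> \<ge> ereal (1 - \<epsilon>)}) = Z"
  proof (rule set_eqI, rule iffI)
    fix \<omega> assume L: "\<omega> \<in> (\<Inter>\<epsilon>\<in>{0<..}. \<Union>c\<in>{0<..}. \<Union>s\<in>{0<..}. {\<omega>. D c s \<omega> \<ge> ereal (1 - \<epsilon>)})"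
    show "\<omega> \<in> Z" unfolding Z_def
    proof (rule INT_I)
      fix k :: nat assume "k \<in> {1..}"
      then have k1: "k \<ge> 1" by simp
      then have "(1 / real k) \<in> {0<..}" by simp
      with L obtain c s where cs: "c > 0" "s > 0" "D c s \<omega> \<ge> ereal (1 - 1 / real k)" by blast
      obtain j :: nat where j: "max 2 (max (1/c) (1/s)) < real j" using reals_Archimedean2 by blast
      have j2: "j \<ge> 2" using j by linarith
      have jp: "real j > 0" using j2 by simp
      have "1/c < real j" "1/s < real j" using j by linarith+
      then have jc: "1 / real j \<le> c" "1 / real j \<le> s" using cs jp by (simp_all add: field_simps)
      have "{n. \<omega> \<in> Bs c s n} \<subseteq> {n. \<omega> \<in> Bs (1/real j) (1/real j) n}"
      proof -
        have "0 < 1 / real j" using jp by simp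
        then have "Bs c s n \<subseteq> Bs (1/real j) (1/real j) n" for n using Bmono jc by blast
        then show ?thesis by blast
      qed
      then have "D c s \<omega> \<le> D (1/real j) (1/real j) \<omega>" unfolding D_def by (rule ud_mono)
      then have "\<omega> \<in> space \<eta> - EE j k" using cs(3) unfolding EE_def sp by auto
      then show "\<omega> \<in> (\<Union>j\<in>{2..}. space \<eta> - EE j k)" using j2 by blast
    qed
  next
    fix \<omega> assume "\<omega> \<in> Z"
    show "\<omega> \<in> (\<Inter>\<epsilon>\<in>{0<..}. \<Union>c\<in>{0<..}. \<Union>s\<in>{0<..}. {\<omega>. D c s \<omega> \<ge> ereal (1 - \<epsilon>)})"
    proof (rule INT_I)
      fix \<epsilon> :: real assume "\<epsilon> \<in> {0<..}"
      then have ep: "\<epsilon> > 0" by simp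
      obtain k :: nat where k: "1/\<epsilon> < real k" using reals_Archimedean2 by blast
      have kp: "real k > 0" using k ep by (smt (verit) divide_pos_pos)
      then have k1: "k \<ge> 1" by simp
      have ke: "1 / real k \<le> \<epsilon>" using k ep kp by (simp add: field_simps)
      from \<open>\<omega> \<in> Z\<close> k1 obtain j where j: "j \<ge> 2" "\<omega> \<in> space \<eta> - EE j k" unfolding Z_def by blast
      then have "D (1/real j) (1/real j) \<omega> \<ge> ereal (1 - 1/real k)" unfolding EE_def by auto
      moreover have "ereal (1 - \<epsilon>) \<le> ereal (1 - 1/real k)" using ke by simp
      ultimately have "D (1/real j) (1/real j) \<omega> \<ge> ereal (1 - \<epsilon>)" by (rule order_trans[rotated])
      moreover have "1/real j > 0" using j by simp
      ultimately show "\<omega> \<in> (\<Union>c\<in>{0<..}. \<Union>s\<in>{0<..}. {\<omega>. D c s \<omega> \<ge> ereal (1 - \<epsilon>)})" by blast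
    qed
  qed
  define N where "N k = (\<Inter>j\<in>{2::nat..}. EE j k)" for k
  have Nnull: "N k \<in> null_sets \<eta>" if "k \<ge> 1" for k
  proof -
    have EEs: "EE j k \<in> sets \<eta>" "measure \<eta> (EE j k) \<le> 2 * G (1/real j) * real k" if "j \<ge> 2" for j
      using E[OF that \<open>k \<ge> 1\<close>] unfolding EE_def by auto
    have Ns: "N k \<in> sets \<eta>" unfolding N_def
      by (rule countable_Un_Int(2)) (use EEs in auto)
    have ev: "eventually (\<lambda>j. measure \<eta> (N k) \<le> 2 * G (1/real j) * real k) sequentially"
      using eventually_ge_at_top[of 2]
    proof eventually_elim
      case (elim j)
      have "N k \<subseteq> EE j k" unfolding N_def using elim by blast
      then have "measure \<eta> (N k) \<le> measure \<eta> (EE j k)" using EEs(1)[OF elim] by (rule finite_measure_mono)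
      then show ?case using EEs(2)[OF elim] by linarith
    qed
    have t1: "filterlim (\<lambda>j. inverse (real j)) (at_right 0) sequentially"
      by (rule filterlim_compose[OF filterlim_inverse_at_right_top filterlim_real_sequentially])
    have "(\<lambda>j. G (inverse (real j))) \<longlonglongrightarrow> 0" by (rule filterlim_compose[OF Glim t1])
    then have "(\<lambda>j. G (1 / real j)) \<longlonglongrightarrow> 0" by (simp add: inverse_eq_divide)
    then have "(\<lambda>j. 2 * G (1 / real j) * real k) \<longlonglongrightarrow> 2 * 0 * real k"
      by (intro tendsto_mult tendsto_const)
    then have lim: "(\<lambda>j. 2 * G (1 / real j) * real k) \<longlonglongrightarrow> 0" by simp
    have "measure \<eta> (N k) \<le> 0" by (rule tendsto_lowerbound[OF lim ev trivial_limit_sequentially])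
    then have "measure \<eta> (N k) = 0" using measure_nonneg[of \<eta> "N k"] by linarith
    then show ?thesis using Ns by (intro null_setsI) (simp add: emeasure_eq_measure)
  qed
  have Zc: "space \<eta> - Z = (\<Union>k\<in>{1::nat..}. N k)" unfolding Z_def N_def EE_def by auto
  have "space \<eta> - Z \<in> null_sets \<eta>" unfolding Zc using Nnull by (intro null_sets_UN') auto
  then have Zs: "Z \<in> sets \<eta>" and "measure \<eta> (space \<eta> - Z) = 0"
  proof -
    assume nz: "space \<eta> - Z \<in> null_sets \<eta>"
    have "Z = space \<eta> - (space \<eta> - Z)" using sp by auto
    then show "Z \<in> sets \<eta>" using nz by (metis null_setsD2 sets.compl_sets)
    show "measure \<eta> (space \<eta> - Z) = 0" using nz by (simp add: emeasure_eq_measure null_sets_def)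
  qed
  then have "measure \<eta> Z = \<mu>" using finite_measure_compl[OF Zs] unfolding \<mu>_def by simp
  then show ?thesis unfolding Zeq[symmetric] D_def Bs_def X_def rr_def \<mu>_def Let_def by simp
qed

end
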